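(* Let $n\ge2$, let $Q=[0,1]^2$ be the unit square, and let $P=\operatorname{conv}\big((Q\times\{0\}^{n-2})\cup\{e_3,\dots,e_n\}\big)\subset\mathbb{R}^n$ be the iterated pyramid over the unit square. Let $\chi$ be the Santaló point of $P$. Then $\operatorname{vol}(P)\operatorname{vol}(P^\chi)\le\dfrac{4n^{n+1}}{(n!)^2}$, with equality if and only if $n=2$ (i.e. $P$ is the unit square).
   Context: For a convex body $K$ with the origin in its interior, $K^*=\{y:\langle x,y\rangle\le1\ \forall x\in K\}$. The Santaló point of $P$ is the unique interior point $\chi$ minimizing $\operatorname{vol}((P-\chi)^* )$; $P^\chi=(P-\chi)^*$. $e_i$ denotes the $i$-th standard basis vector. *)

theory Defs
  imports "HOL-Analysis.Analysis"
begin

definition polar :: "('a::real_inner) set \<Rightarrow> 'a set" where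
  "polar K = {y. \<forall>x\<in>K. inner x y \<le> 1}"

definition santalo_point :: "('a::euclidean_space) set \<Rightarrow> 'a \<Rightarrow> bool" where
  "santalo_point P c \<longleftrightarrow> c \<in> interior P \<and>
     (\<forall>z\<in>interior P. measure lebesgue (polar ((\<lambda>x. x - c) ` P))
                      \<le> measure lebesgue (polar ((\<lambda>x. x - z) ` P)))"

definition sq_pyramid :: "'n::finite \<Rightarrow> 'n \<Rightarrow> (real^'n) set" where
  "sq_pyramid i j = convex hull
     ({x. 0 \<le> x$i \<and> x$i \<le> 1 \<and> 0 \<le> x$j \<and> x$j \<le> 1 \<and> (\<forall>k. k \<noteq> i \<and> k \<noteq> j \<longrightarrow> x$k = 0)}
      \<union> {axis k 1 | k. k \<noteq> i \<and> k \<noteq> j})"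

end

theory Submission
  imports Defs
begin


proposition
 fixes f :: "real^'n::finite \<Rightarrow> real^'n::_"
  assumes "linear f" "S \<in> lmeasurable"
  shows measurable_linear_image_fin: "(f ` S) \<in> lmeasurable"
    and measure_linear_image_fin: "measure lebesgue (f ` S) = \<bar>det (matrix f)\<bar> * measure lebesgue S" (is "?Q f S")
proof -
  have "\<forall>S \<in> lmeasurable. (f ` S) \<in> lmeasurable \<and> ?Q f S"
  proof (rule induct_linear_elementary [OF \<open>linear f\<close>]; intro ballI)
    fix f g and S :: "(real,'n) vec set"
    assume "linear f" and "linear g"
      and f [rule_format]: "\<forall>S \<in> lmeasurable. f ` S \<in> lmeasurable \<and> ?Q f S"
      and g [rule_format]: "\<forall>S \<in> lmeasurable. g ` S \<in> lmeasurable \<and> ?Q g S"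
      and S: "S \<in> lmeasurable"
    then have gS: "g ` S \<in> lmeasurable"
      by blast
    show "(f \<circ> g) ` S \<in> lmeasurable \<and> ?Q (f \<circ> g) S"
      using f [OF gS] g [OF S] matrix_compose [OF \<open>linear g\<close> \<open>linear f\<close>]
      by (simp add: o_def image_comp abs_mult det_mul)
  next
    fix f :: "real^'n::_ \<Rightarrow> real^'n::_" and i and S :: "(real^'n::_) set"
    assume "linear f" and 0: "\<And>x. f x $ i = 0" and "S \<in> lmeasurable"
    then have "\<not> inj f"
      by (metis (full_types) linear_injective_imp_surjective one_neq_zero surjE vec_component)
    have detf: "det (matrix f) = 0"
      using \<open>\<not> inj f\<close> det_nz_iff_inj[OF \<open>linear f\<close>] by blast
    show "f ` S \<in> lmeasurable \<and> ?Q f S"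
    proof
      show "f ` S \<in> lmeasurable"
        using lmeasurable_iff_indicator_has_integral \<open>linear f\<close> \<open>\<not> inj f\<close> negligible_UNIV negligible_linear_singular_image by blast
      have "measure lebesgue (f ` S) = 0"
        by (meson \<open>\<not> inj f\<close> \<open>linear f\<close> negligible_imp_measure0 negligible_linear_singular_image)
      also have "\<dots> = \<bar>det (matrix f)\<bar> * measure lebesgue S"
        by (simp add: detf)
      finally show "?Q f S" .
    qed
  next
    fix c and S :: "(real^'n::_) set"
    assume "S \<in> lmeasurable"
    show "(\<lambda>a. \<chi> i. c i * a $ i) ` S \<in> lmeasurable \<and> ?Q (\<lambda>a. \<chi> i. c i * a $ i) S"
    proof
      show "(\<lambda>a. \<chi> i. c i * a $ i) ` S \<in> lmeasurable"
        by (simp add: \<open>S \<in> lmeasurable\<close> measurable_stretch)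
      show "?Q (\<lambda>a. \<chi> i. c i * a $ i) S"
        by (simp add: measure_stretch [OF \<open>S \<in> lmeasurable\<close>, of c] axis_def matrix_def det_diagonal)
    qed
  next
    fix m :: "'n" and n :: "'n" and S :: "(real, 'n) vec set"
    assume "m \<noteq> n" and "S \<in> lmeasurable"
    let ?h = "\<lambda>v::(real, 'n) vec. \<chi> i. v $ Transposition.transpose m n i"
    have lin: "linear ?h"
      by (rule linearI) (simp_all add: plus_vec_def scaleR_vec_def)
    have meq: "measure lebesgue ((\<lambda>v::(real, 'n) vec. \<chi> i. v $ Transposition.transpose m n i) ` cbox a b)
             = measure lebesgue (cbox a b)" for a b
    proof (cases "cbox a b = {}")
      case True then show ?thesis
        by simp
    next
      case False
      then have him: "?h ` (cbox a b) \<noteq> {}"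
        by blast
      have eq: "?h ` (cbox a b) = cbox (?h a) (?h b)"
        by (auto simp: image_iff lambda_swap_Galois mem_box_cart) (metis transpose_involutory)+
      show ?thesis
        using him prod.permute [OF permutes_swap_id, where S=UNIV and g="\<lambda>i. (b - a)$i", symmetric]
        by (simp add: eq content_cbox_cart False)
    qed
    have "(\<chi> i j. if Transposition.transpose m n i = j then 1 else 0) = (\<chi> i j. if j = Transposition.transpose m n i then 1 else (0::real))"
      by (auto intro!: Cart_lambda_cong)
    then have "matrix ?h = transpose(\<chi> i j. mat 1 $ i $ Transposition.transpose m n j)"
      by (auto simp: matrix_eq transpose_def axis_def mat_def matrix_def)
    then have 1: "\<bar>det (matrix ?h)\<bar> = 1"
      by (simp add: det_permute_columns permutes_swap_id sign_swap_id abs_mult)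
    show "?h ` S \<in> lmeasurable \<and> ?Q ?h S"
      using measure_linear_sufficient [OF lin \<open>S \<in> lmeasurable\<close>] meq 1 by force
  next
    fix m n :: "'n" and S :: "(real, 'n) vec set"
    assume "m \<noteq> n" and "S \<in> lmeasurable"
    let ?h = "\<lambda>v::(real, 'n) vec. \<chi> i. if i = m then v $ m + v $ n else v $ i"
    have lin: "linear ?h"
      by (rule linearI) (auto simp: algebra_simps plus_vec_def scaleR_vec_def vec_eq_iff)
    have 1: "det(matrix ?h) = 1"
    proof -
      have "matrix ?h = (\<chi> k. if k = m then row m (mat 1) + 1 *s row n (mat 1) else row k (mat 1 :: real^'n^'n))"
        by (auto simp: matrix_def vec_eq_iff row_def mat_def axis_def)
      then show ?thesis using det_row_operation[OF \<open>m \<noteq> n\<close>, of "mat 1 :: real^'n^'n" 1] by simp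
    qed
    have meq: "measure lebesgue (?h ` (cbox a b)) = measure lebesgue (cbox a b)" for a b
    proof (cases "cbox a b = {}")
      case True then show ?thesis by simp
    next
      case False
      then have ne: "(+) (\<chi> i. if i = n then - a $ n else 0) ` cbox a b \<noteq> {}"
        by auto
      let ?v = "\<chi> i. if i = n then - a $ n else 0"
      have "?h ` cbox a b
            = (+) (\<chi> i. if i = m \<or> i = n then a $ n else 0) ` ?h ` (+) ?v ` (cbox a b)"
        using \<open>m \<noteq> n\<close> unfolding image_comp o_def by (force simp: vec_eq_iff)
      then have "measure lebesgue (?h ` (cbox a b))
               = measure lebesgue ((\<lambda>v. \<chi> i. if i = m then v $ m + v $ n else v $ i) `
                                   (+) ?v ` cbox a b)"
        by (rule ssubst) (rule measure_translation)
      also have "\<dots> = measure lebesgue ((\<lambda>v. \<chi> i. if i = m then v $ m + v $ n else v $ i) ` cbox (?v +a) (?v + b))"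
        by (metis (no_types, lifting) cbox_translation)
      also have "\<dots> = measure lebesgue ((+) ?v ` cbox a b)"
        apply (subst measure_shear_interval)
        using \<open>m \<noteq> n\<close> ne apply auto
        apply (simp add: cbox_translation)
        by (metis cbox_borel cbox_translation measure_completion sets_lborel)
      also have "\<dots> = measure lebesgue (cbox a b)"
        by (rule measure_translation)
        finally show ?thesis .
      qed
    show "?h ` S \<in> lmeasurable \<and> ?Q ?h S"
      using measure_linear_sufficient [OF lin \<open>S \<in> lmeasurable\<close>] meq 1 by force
  qed
  with assms show "(f ` S) \<in> lmeasurable" "?Q f S"
    by metis+
qed




lemma det_rows_H1:
  fixes E :: "'n::finite \<Rightarrow> real^'n" and V :: "real^'n"
  assumes "finite R" "r0 \<notin> R"
  shows "det (\<chi> r. if r = r0 then V else if r \<in> R then E r + u r *s V else E r)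
       = det (\<chi> r. if r = r0 then V else E r)"
  using assms
proof (induction R rule: finite_induct)
  case empty
  have "(\<chi> r. if r = r0 then V else if r \<in> {} then E r + u r *s V else E r) = (\<chi> r. if r = r0 then V else E r)"
    by (simp add: vec_eq_iff)
  then show ?case by simp
next
  case (insert r1 R)
  define C where "C = (\<lambda>r. if r = r0 then V else if r \<in> R then E r + u r *s V else E r)"
  have r1: "r1 \<noteq> r0" using insert by auto
  have eq: "(\<chi> r. if r = r0 then V else if r \<in> insert r1 R then E r + u r *s V else E r)
     = (\<chi> r. if r = r1 then E r + u r *s V else C r)"
    using r1 insert.hyps by (auto simp: vec_eq_iff C_def)
  have eq1: "(\<chi> r. if r = r1 then E r else C r) = (\<chi> r. if r = r0 then V else if r \<in> R then E r + u r *s V else E r)"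
    using r1 insert.hyps by (auto simp: vec_eq_iff C_def)
  have z: "det (\<chi> r. if r = r1 then V else C r) = 0"
    by (rule det_identical_rows[OF r1]) (auto simp: row_def C_def vec_eq_iff r1)
  have "det (\<chi> r. if r = r1 then E r + u r *s V else C r)
      = det (\<chi> r. if r = r1 then E r else C r) + det (\<chi> r. if r = r1 then u r *s V else C r)"
    by (rule det_row_add)
  also have "det (\<chi> r. if r = r1 then u r *s V else C r) = u r1 * det (\<chi> r. if r = r1 then V else C r)"
  proof -
    have "(\<chi> r. if r = r1 then u r *s V else C r) = (\<chi> r. if r = r1 then u r1 *s V else C r)"
      by (auto simp: vec_eq_iff)
    then show ?thesis using det_row_mul[of r1 "u r1" "\<lambda>_. V" C] by simp
  qed
  finally show ?case using eq eq1 z insert by simp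
qed

lemma det_rows_H2:
  fixes d :: "'n::finite \<Rightarrow> real" and V :: "real^'n"
  shows "det (\<chi> r. if r = r0 then V else d r *s axis r 1)
       = V$r0 * prod d (UNIV - {r0})"
proof -
  have V: "V = (\<Sum>c\<in>UNIV. V$c *s axis c 1)"
    by (simp add: vec_eq_iff sum_component axis_def if_distrib[of "\<lambda>x. _ * x"] cong: if_cong)
  have "det (\<chi> r. if r = r0 then V else d r *s axis r 1)
      = det (\<chi> r. if r = r0 then (\<Sum>c\<in>UNIV. (\<lambda>r c. V$c *s axis c (1::real)) r c) else d r *s axis r 1)"
    by (simp only: V[symmetric])
  also have "\<dots> = (\<Sum>c\<in>UNIV. det (\<chi> r. if r = r0 then V$c *s axis c (1::real) else d r *s axis r 1))"
    by (rule det_linear_row_sum) simp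
  also have "\<dots> = (\<Sum>c\<in>{r0}. det (\<chi> r. if r = r0 then V$c *s axis c (1::real) else d r *s axis r 1))"
  proof (rule sum.mono_neutral_right)
    show "\<forall>c\<in>UNIV - {r0}. det (\<chi> r. if r = r0 then V$c *s axis c (1::real) else d r *s axis r 1) = 0"
    proof
      fix c assume c: "c \<in> UNIV - {r0}"
      hence cr: "c \<noteq> r0" by auto
      define B where "B = (\<lambda>r. if r = r0 then axis c (1::real) else if r = c then axis c 1 else d r *s axis r 1)"
      have "det (\<chi> r. if r = r0 then V$c *s axis c (1::real) else d r *s axis r 1)
          = V$c * det (\<chi> r. if r = r0 then axis c (1::real) else d r *s axis r 1)"
        using det_row_mul[of r0 "V$c" "\<lambda>_. axis c 1" "\<lambda>r. d r *s axis r 1"] by simp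
      also have "(\<chi> r. if r = r0 then axis c (1::real) else d r *s axis r 1) = (\<chi> r. if r = c then d c *s axis c 1 else B r)"
        using cr by (auto simp: vec_eq_iff B_def)
      also have "det \<dots> = d c * det (\<chi> r. if r = c then axis c 1 else B r)"
        using det_row_mul[of c "d c" "\<lambda>_. axis c 1" B] by simp
      also have "det (\<chi> r. if r = c then axis c (1::real) else B r) = 0"
        by (rule det_identical_rows[OF cr]) (auto simp: row_def B_def vec_eq_iff)
      finally show "det (\<chi> r. if r = r0 then V$c *s axis c (1::real) else d r *s axis r 1) = 0" by simp
    qed
  qed auto
  also have "\<dots> = det (\<chi> r. if r = r0 then V$r0 *s axis r0 (1::real) else d r *s axis r 1)" by simp
  also have "\<dots> = (\<Prod>r\<in>UNIV. (if r = r0 then V$r0 else d r))"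
    by (subst det_diagonal) (auto simp: axis_def intro!: prod.cong)
  also have "\<dots> = V$r0 * prod d (UNIV - {r0})"
    by (subst prod.remove[of UNIV r0]) (auto intro!: prod.cong)
  finally show ?thesis .
qed

lemma det_rows_F:
  fixes d u :: "'n::finite \<Rightarrow> real" and V :: "real^'n"
  assumes "finite R"
  shows "det (\<chi> r. if r \<in> R then d r *s axis r 1 + u r *s V else d r *s axis r 1)
       = prod d UNIV + (\<Sum>r\<in>R. u r * V$r * prod d (UNIV - {r}))"
  using assms
proof (induction R rule: finite_induct)
  case empty
  have "det (\<chi> r. d r *s axis r (1::real)) = prod d UNIV"
    by (subst det_diagonal) (auto simp: axis_def)
  then show ?case by simp
next
  case (insert r0 R)
  define C where "C = (\<lambda>r. if r \<in> R then d r *s axis r 1 + u r *s V else d r *s axis r (1::real))"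
  have eq: "(\<chi> r. if r \<in> insert r0 R then d r *s axis r 1 + u r *s V else d r *s axis r 1)
     = (\<chi> r. if r = r0 then d r *s axis r 1 + u r *s V else C r)"
    using insert.hyps by (auto simp: vec_eq_iff C_def)
  have eq1: "(\<chi> r. if r = r0 then d r *s axis r 1 else C r) = (\<chi> r. if r \<in> R then d r *s axis r 1 + u r *s V else d r *s axis r 1)"
    using insert.hyps by (auto simp: vec_eq_iff C_def)
  have "det (\<chi> r. if r = r0 then d r *s axis r 1 + u r *s V else C r)
      = det (\<chi> r. if r = r0 then d r *s axis r 1 else C r) + det (\<chi> r. if r = r0 then u r *s V else C r)"
    by (rule det_row_add)
  also have "det (\<chi> r. if r = r0 then u r *s V else C r) = u r0 * det (\<chi> r. if r = r0 then V else C r)"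
  proof -
    have "(\<chi> r. if r = r0 then u r *s V else C r) = (\<chi> r. if r = r0 then u r0 *s V else C r)"
      by (auto simp: vec_eq_iff)
    then show ?thesis using det_row_mul[of r0 "u r0" "\<lambda>_. V" C] by simp
  qed
  also have "det (\<chi> r. if r = r0 then V else C r) = det (\<chi> r. if r = r0 then V else d r *s axis r 1)"
  proof -
    have "(\<chi> r. if r = r0 then V else C r) = (\<chi> r. if r = r0 then V else if r \<in> R then d r *s axis r 1 + u r *s V else d r *s axis r 1)"
      by (auto simp: vec_eq_iff C_def)
    then show ?thesis using det_rows_H1[OF insert.hyps, of V "\<lambda>r. d r *s axis r 1" u] by simp
  qed
  also have "\<dots> = V$r0 * prod d (UNIV - {r0})" by (rule det_rows_H2)
  finally show ?case using eq eq1 insert by (simp add: algebra_simps)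
qed

lemma det_diag_rank1:
  fixes d u :: "'n::finite \<Rightarrow> real" and V :: "real^'n"
  shows "det (\<chi> r c. (if r = c then d r else 0) + u r * V$c)
       = prod d UNIV + (\<Sum>r\<in>UNIV. u r * V$r * prod d (UNIV - {r}))"
proof -
  have "(\<chi> r c. (if r = c then d r else 0) + u r * V$c) = (\<chi> r. if r \<in> UNIV then d r *s axis r 1 + u r *s V else d r *s axis r 1)"
    by (auto simp: vec_eq_iff axis_def)
  then show ?thesis using det_rows_F[of UNIV d u V] by simp
qed




definition KK :: "'n::finite \<Rightarrow> 'n \<Rightarrow> 'n set" where "KK i j = UNIV - {i, j}"

definition Cset :: "'n::finite \<Rightarrow> 'n \<Rightarrow> (real^'n) set" where
  "Cset i j = {x. 0 \<le> x$i \<and> 0 \<le> x$j \<and> (\<forall>k\<in>KK i j. 0 \<le> x$k)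
      \<and> x$i + (\<Sum>k\<in>KK i j. x$k) \<le> 1 \<and> x$j + (\<Sum>k\<in>KK i j. x$k) \<le> 1}"

lemma sum_split3:
  fixes f :: "'n::finite \<Rightarrow> 'a::comm_monoid_add"
  assumes "i \<noteq> j"
  shows "sum f UNIV = f i + f j + sum f (KK i j)"
proof -
  have "UNIV = insert i (insert j (KK i j))" by (auto simp: KK_def)
  then have "sum f UNIV = sum f (insert i (insert j (KK i j)))" by simp
  also have "\<dots> = f i + f j + sum f (KK i j)"
    using assms by (simp add: KK_def add.assoc)
  finally show ?thesis .
qed

lemma KK_iff: "k \<in> KK i j \<longleftrightarrow> k \<noteq> i \<and> k \<noteq> j" by (auto simp: KK_def)

lemma convex_Cset:
  fixes i j :: "'n::finite"
  shows "convex (Cset i j)"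
  unfolding convex_def
proof (intro ballI allI impI)
  fix x y :: "real^'n" and u v :: real
  assume x: "x \<in> Cset i j" and y: "y \<in> Cset i j" and u: "0 \<le> u" and v: "0 \<le> v" and uv: "u + v = 1"
  let ?S = "\<lambda>x::real^'n. \<Sum>k\<in>KK i j. x$k"
  have S: "?S (u *\<^sub>R x + v *\<^sub>R y) = u * ?S x + v * ?S y"
    by (simp add: sum.distrib sum_distrib_left)
  have S': "(\<Sum>k\<in>KK i j. u * x$k + v * y$k) = u * ?S x + v * ?S y"
    by (simp add: sum.distrib sum_distrib_left)
  from x have x1: "0 \<le> x$i" "0 \<le> x$j" "\<forall>k\<in>KK i j. 0 \<le> x$k" "x$i + ?S x \<le> 1" "x$j + ?S x \<le> 1"
    by (auto simp: Cset_def)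
  from y have y1: "0 \<le> y$i" "0 \<le> y$j" "\<forall>k\<in>KK i j. 0 \<le> y$k" "y$i + ?S y \<le> 1" "y$j + ?S y \<le> 1"
    by (auto simp: Cset_def)
  have a: "u * (x$i + ?S x) + v * (y$i + ?S y) \<le> u * 1 + v * 1"
    using x1 y1 u v by (intro add_mono mult_left_mono) auto
  have b: "u * (x$j + ?S x) + v * (y$j + ?S y) \<le> u * 1 + v * 1"
    using x1 y1 u v by (intro add_mono mult_left_mono) auto
  show "u *\<^sub>R x + v *\<^sub>R y \<in> Cset i j"
    unfolding Cset_def using x1 y1 u v a b uv
    by (auto simp: S' algebra_simps intro!: add_nonneg_nonneg mult_nonneg_nonneg)
qed

lemma pyr_eq:
  fixes i j :: "'n::finite"
  assumes ij: "i \<noteq> j"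
  shows "sq_pyramid i j = Cset i j"
proof
  show "sq_pyramid i j \<subseteq> Cset i j"
    unfolding sq_pyramid_def
  proof (rule hull_minimal[where S=convex, OF _ convex_Cset])
    show "{x. 0 \<le> x $ i \<and> x $ i \<le> 1 \<and> 0 \<le> x $ j \<and> x $ j \<le> 1 \<and> (\<forall>k. k \<noteq> i \<and> k \<noteq> j \<longrightarrow> x $ k = 0)} \<union>
    {axis k 1 |k. k \<noteq> i \<and> k \<noteq> j} \<subseteq> Cset i j"
    proof
      fix x :: "real^'n"
      assume "x \<in> {x. 0 \<le> x $ i \<and> x $ i \<le> 1 \<and> 0 \<le> x $ j \<and> x $ j \<le> 1 \<and> (\<forall>k. k \<noteq> i \<and> k \<noteq> j \<longrightarrow> x $ k = 0)} \<union>
         {axis k 1 |k. k \<noteq> i \<and> k \<noteq> j}"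
      then consider "0 \<le> x $ i \<and> x $ i \<le> 1 \<and> 0 \<le> x $ j \<and> x $ j \<le> 1 \<and> (\<forall>k. k \<noteq> i \<and> k \<noteq> j \<longrightarrow> x $ k = 0)"
        | k where "k \<noteq> i" "k \<noteq> j" "x = axis k 1" by blast
      then show "x \<in> Cset i j"
      proof cases
        case 1
        then have "(\<Sum>k\<in>KK i j. x$k) = 0" by (auto simp: KK_iff intro!: sum.neutral)
        with 1 show ?thesis by (auto simp: Cset_def KK_iff)
      next
        case 2
        then have "(\<Sum>l\<in>KK i j. x$l) = 1"
          by (auto simp: axis_def KK_iff sum.delta)
        with 2 show ?thesis by (auto simp: Cset_def KK_iff axis_def)
      qed
    qed
  qed
next
  show "Cset i j \<subseteq> sq_pyramid i j"
  proof
    fix x :: "real^'n" assume x: "x \<in> Cset i j"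
    define S where "S = (\<Sum>k\<in>KK i j. x$k)"
    define \<mu> where "\<mu> = 1 - S"
    have x1: "0 \<le> x$i" "0 \<le> x$j" "\<And>k. k \<in> KK i j \<Longrightarrow> 0 \<le> x$k" "x$i \<le> \<mu>" "x$j \<le> \<mu>"
      using x by (auto simp: Cset_def \<mu>_def S_def)
    have mu: "0 \<le> \<mu>" using x1 by linarith
    define q :: "real^'n" where "q = (\<chi> l. if l = i then x$i / \<mu> else if l = j then x$j / \<mu> else 0)"
    define p where "p = (\<lambda>l. if l = i \<or> l = j then q else axis l (1::real))"
    define w where "w = (\<lambda>l. if l = i then \<mu> else if l = j then 0 else x$l)"
    have q1: "x$i / \<mu> \<le> 1" "x$j / \<mu> \<le> 1"
      using x1 mu by (auto simp: divide_le_eq)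
    have gen: "p l \<in> {x. 0 \<le> x $ i \<and> x $ i \<le> 1 \<and> 0 \<le> x $ j \<and> x $ j \<le> 1 \<and> (\<forall>k. k \<noteq> i \<and> k \<noteq> j \<longrightarrow> x $ k = 0)} \<union>
         {axis k 1 |k. k \<noteq> i \<and> k \<noteq> j}" for l
      using q1 x1 mu ij by (auto simp: p_def q_def)
    have wK: "(\<Sum>l\<in>KK i j. w l) = S"
      unfolding S_def by (rule sum.cong) (auto simp: w_def KK_iff)
    have wsum: "sum w UNIV = 1"
      using ij by (simp add: sum_split3[OF ij] wK) (simp add: w_def \<mu>_def)
    have wnn: "0 \<le> w l" for l
      using x1 mu by (auto simp: w_def KK_iff)
    have "(\<Sum>l\<in>UNIV. w l *\<^sub>R p l) \<in> convex hull ({x. 0 \<le> x $ i \<and> x $ i \<le> 1 \<and> 0 \<le> x $ j \<and> x $ j \<le> 1 \<and> (\<forall>k. k \<noteq> i \<and> k \<noteq> j \<longrightarrow> x $ k = 0)} \<union>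
         {axis k 1 |k. k \<noteq> i \<and> k \<noteq> j})"
      by (rule convex_sum) (use wsum wnn gen[THEN hull_inc[where P=convex]] in \<open>auto\<close>)
    moreover have "(\<Sum>l\<in>UNIV. w l *\<^sub>R p l) = x"
    proof (subst vec_eq_iff, intro allI)
      fix m
      have e: "(\<Sum>l\<in>UNIV. w l *\<^sub>R p l) $ m = w i * q$m + w j * q$m + (\<Sum>l\<in>KK i j. x$l * axis l 1 $ m)"
        using ij by (simp add: sum_component sum_split3[OF ij]) (auto simp: p_def w_def KK_iff intro!: sum.cong)
      show "(\<Sum>l\<in>UNIV. w l *\<^sub>R p l) $ m = x $ m"
      proof (cases "m = i \<or> m = j")
        case True
        have z: "(\<Sum>l\<in>KK i j. x$l * axis l 1 $ m) = 0"
          using True by (auto simp: axis_def KK_iff intro!: sum.neutral)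
        show ?thesis using True ij x1 mu unfolding e z
          by (auto simp: w_def q_def)
      next
        case False
        then have "(\<Sum>l\<in>KK i j. x$l * axis l 1 $ m) = x$m"
          by (simp add: axis_def KK_iff sum.delta if_distrib[of "\<lambda>t. _ * t"] cong: if_cong)
        then show ?thesis using False unfolding e by (simp add: q_def)
      qed
    qed
    ultimately show "x \<in> sq_pyramid i j" by (simp add: sq_pyramid_def)
  qed
qed

lemma inner_split:
  fixes x y :: "real^'n::finite"
  assumes "i \<noteq> j"
  shows "x \<bullet> y = x$i * y$i + x$j * y$j + (\<Sum>k\<in>KK i j. x$k * y$k)"
  by (simp add: inner_vec_def sum_split3[OF assms])

definition Rset :: "'n::finite \<Rightarrow> 'n \<Rightarrow> real^'n \<Rightarrow> (real^'n) set" where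
  "Rset i j z = {y. max 0 (y$i) + max 0 (y$j) - z \<bullet> y \<le> 1 \<and> (\<forall>k\<in>KK i j. y$k - z \<bullet> y \<le> 1)}"

lemma polar_eq:
  fixes i j :: "'n::finite" and z :: "real^'n"
  assumes ij: "i \<noteq> j"
  shows "polar ((\<lambda>x. x - z) ` sq_pyramid i j) = Rset i j z"
proof -
  have "y \<in> polar ((\<lambda>x. x - z) ` Cset i j) \<longleftrightarrow> y \<in> Rset i j z" for y
  proof
    assume y: "y \<in> polar ((\<lambda>x. x - z) ` Cset i j)"
    then have yy: "\<And>x. x \<in> Cset i j \<Longrightarrow> x \<bullet> y - z \<bullet> y \<le> 1"
      by (auto simp: polar_def inner_diff_left)
    define x1 :: "real^'n" where "x1 = (\<chi> l. if l = i then (if 0 \<le> y$i then 1 else 0) else if l = j then (if 0 \<le> y$j then 1 else 0) else 0)"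
    have "(\<Sum>k\<in>KK i j. x1$k) = 0" "(\<Sum>k\<in>KK i j. x1$k * y$k) = 0"
      by (auto simp: x1_def KK_iff intro!: sum.neutral)
    then have "x1 \<in> Cset i j" "x1 \<bullet> y = max 0 (y$i) + max 0 (y$j)"
      using ij by (auto simp: Cset_def x1_def inner_split[OF ij] KK_iff)
    then have 1: "max 0 (y$i) + max 0 (y$j) - z \<bullet> y \<le> 1" using yy by fastforce
    have 2: "y$k - z \<bullet> y \<le> 1" if k: "k \<in> KK i j" for k
    proof -
      have "(\<Sum>l\<in>KK i j. axis k 1 $ l) = (1::real)"
        using k by (simp add: axis_def sum.delta)
      then have "axis k 1 \<in> Cset i j" using k by (auto simp: Cset_def axis_def KK_iff)
      then show ?thesis using yy[of "axis k 1"] by (simp add: cart_eq_inner_axis inner_commute)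
    qed
    show "y \<in> Rset i j z" using 1 2 by (auto simp: Rset_def)
  next
    assume y: "y \<in> Rset i j z"
    let ?w = "z \<bullet> y"
    have R1: "max 0 (y$i) + max 0 (y$j) \<le> 1 + ?w" and R2: "\<And>k. k \<in> KK i j \<Longrightarrow> y$k \<le> 1 + ?w"
      using y by (auto simp: Rset_def)
    have "(x - z) \<bullet> y \<le> 1" if x: "x \<in> Cset i j" for x
    proof -
      define S where "S = (\<Sum>k\<in>KK i j. x$k)"
      have x1: "0 \<le> x$i" "0 \<le> x$j" "\<And>k. k \<in> KK i j \<Longrightarrow> 0 \<le> x$k" "x$i \<le> 1 - S" "x$j \<le> 1 - S"
        using x by (auto simp: Cset_def S_def)
      have a: "x$i * y$i \<le> (1 - S) * max 0 (y$i)"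
        using x1 by (smt (verit) mult_left_mono mult_right_mono mult_nonneg_nonneg)
      have b: "x$j * y$j \<le> (1 - S) * max 0 (y$j)"
        using x1 by (smt (verit) mult_left_mono mult_right_mono mult_nonneg_nonneg)
      have c: "(1 - S) * (max 0 (y$i) + max 0 (y$j)) \<le> (1 - S) * (1 + ?w)"
        using x1 R1 by (intro mult_left_mono) auto
      have d: "(\<Sum>k\<in>KK i j. x$k * y$k) \<le> (\<Sum>k\<in>KK i j. x$k * (1 + ?w))"
        using x1 R2 by (intro sum_mono mult_left_mono) auto
      have e: "(\<Sum>k\<in>KK i j. x$k * (1 + ?w)) = S * (1 + ?w)"
        by (simp add: S_def sum_distrib_right)
      have "x \<bullet> y \<le> 1 + ?w"
        unfolding inner_split[OF ij, of x y] using a b c d e by (simp add: algebra_simps)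
      then show ?thesis by (simp add: inner_diff_left)
    qed
    then show "y \<in> polar ((\<lambda>x. x - z) ` Cset i j)" by (auto simp: polar_def)
  qed
  then show ?thesis using pyr_eq[OF ij] by auto
qed




definition Std :: "(real^'n::finite) set" where
  "Std = {p. (\<forall>l. 0 \<le> p$l) \<and> (\<Sum>l\<in>UNIV. p$l) \<le> 1}"

lemma Std_hull: "Std = convex hull (insert 0 (Basis :: (real^'n::finite) set))"
proof -
  have "sum (\<lambda>b. x \<bullet> b) (Basis :: (real^'n) set) = (\<Sum>l\<in>UNIV. x$l)" for x :: "real^'n"
  proof -
    have "sum (\<lambda>b. x \<bullet> b) (Basis :: (real^'n) set) = sum ((\<lambda>b. x \<bullet> b) \<circ> (\<lambda>l. axis l 1)) UNIV"
      proof -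
      have B: "(Basis :: (real^'n) set) = (\<lambda>l. axis l 1) ` UNIV" unfolding Basis_vec_def by auto
      show ?thesis unfolding B by (subst sum.reindex) (auto simp: inj_on_def axis_eq_axis)
    qed
    then show ?thesis by (simp add: o_def cart_eq_inner_axis)
  qed
  then show ?thesis
    unfolding std_simplex Std_def by (auto simp: Basis_vec_def cart_eq_inner_axis)
qed

lemma Std_compact: "compact (Std :: (real^'n::finite) set)"
  unfolding Std_hull by (rule finite_imp_compact_convex_hull) auto

lemma Std_lmeasurable: "(Std :: (real^'n::finite) set) \<in> lmeasurable"
  by (rule lmeasurable_compact[OF Std_compact])

lemma measure_Std: "measure lebesgue (Std :: (real^'n::finite) set) = 1 / fact CARD('n)"
proof -
  have "Std \<in> sets lborel" using Std_compact by (auto intro: borel_closed compact_imp_closed)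
  then have "measure lebesgue (Std :: (real^'n) set) = measure lborel (Std :: (real^'n) set)"
    by (metis measure_completion sets_lborel)
  also have "\<dots> = 1 / fact CARD('n)"
    unfolding Std_hull by (simp add: content_std_simplex)
  finally show ?thesis .
qed

lemma Sp_image:
  fixes c :: "'n::finite \<Rightarrow> real"
  assumes c: "\<And>l. 0 < c l"
  shows "{p::real^'n. (\<forall>l. 0 \<le> p$l) \<and> (\<Sum>l\<in>UNIV. c l * p$l) \<le> 1} = (\<lambda>x. \<chi> k. (1 / c k) * x$k) ` Std"
proof
  show "{p::real^'n. (\<forall>l. 0 \<le> p$l) \<and> (\<Sum>l\<in>UNIV. c l * p$l) \<le> 1} \<subseteq> (\<lambda>x. \<chi> k. (1 / c k) * x$k) ` Std"
  proof
    fix p :: "real^'n" assume p: "p \<in> {p. (\<forall>l. 0 \<le> p$l) \<and> (\<Sum>l\<in>UNIV. c l * p$l) \<le> 1}"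
    have "(\<chi> k. c k * p$k) \<in> Std" using p c by (auto simp: Std_def less_imp_le)
    moreover have "p = (\<chi> k. (1 / c k) * (\<chi> k. c k * p$k)$k)"
      using c by (simp add: vec_eq_iff) (metis less_irrefl)
    ultimately show "p \<in> (\<lambda>x. \<chi> k. (1 / c k) * x$k) ` Std" by blast
  qed
next
  show "(\<lambda>x. \<chi> k. (1 / c k) * x$k) ` Std \<subseteq> {p::real^'n. (\<forall>l. 0 \<le> p$l) \<and> (\<Sum>l\<in>UNIV. c l * p$l) \<le> 1}"
  proof
    fix p assume "p \<in> (\<lambda>x::real^'n. \<chi> k. (1 / c k) * x$k) ` Std"
    then obtain x where x: "x \<in> Std" and p: "p = (\<chi> k. (1 / c k) * x$k)" by blast
    have "(\<Sum>l\<in>UNIV. c l * p$l) = (\<Sum>l\<in>UNIV. x$l)"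
      using c by (simp add: p) (metis less_irrefl)
    then show "p \<in> {p::real^'n. (\<forall>l. 0 \<le> p$l) \<and> (\<Sum>l\<in>UNIV. c l * p$l) \<le> 1}"
      using x c by (auto simp: Std_def p less_imp_le)
  qed
qed

lemma measure_Sp:
  fixes c :: "'n::finite \<Rightarrow> real"
  assumes c: "\<And>l. 0 < c l"
  shows "{p::real^'n. (\<forall>l. 0 \<le> p$l) \<and> (\<Sum>l\<in>UNIV. c l * p$l) \<le> 1} \<in> lmeasurable"
    and "measure lebesgue {p::real^'n. (\<forall>l. 0 \<le> p$l) \<and> (\<Sum>l\<in>UNIV. c l * p$l) \<le> 1}
           = 1 / (prod c UNIV * fact CARD('n))"
proof -
  show "{p::real^'n. (\<forall>l. 0 \<le> p$l) \<and> (\<Sum>l\<in>UNIV. c l * p$l) \<le> 1} \<in> lmeasurable"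
    unfolding Sp_image[OF c] by (rule measurable_stretch[OF Std_lmeasurable])
  have "\<bar>prod (\<lambda>k. 1 / c k) UNIV\<bar> = 1 / prod c UNIV"
    using c by (simp add: prod_dividef less_imp_le prod_nonneg)
  then show "measure lebesgue {p::real^'n. (\<forall>l. 0 \<le> p$l) \<and> (\<Sum>l\<in>UNIV. c l * p$l) \<le> 1}
           = 1 / (prod c UNIV * fact CARD('n))"
    unfolding Sp_image[OF c] measure_stretch[OF Std_lmeasurable] measure_Std by simp
qed




definition sg :: "bool \<Rightarrow> real" where "sg \<sigma> = (if \<sigma> then 1 else -1)"
definition qq :: "bool \<Rightarrow> real" where "qq \<sigma> = (if \<sigma> then 1 else 0)"

definition ss :: "'n::finite \<Rightarrow> 'n \<Rightarrow> real^'n \<Rightarrow> real" where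
  "ss i j z = 1 - (\<Sum>k\<in>KK i j. z$k)"

definition Lmap :: "'n::finite \<Rightarrow> 'n \<Rightarrow> real^'n \<Rightarrow> bool \<Rightarrow> bool \<Rightarrow> real^'n \<Rightarrow> real^'n" where
  "Lmap i j z \<sigma>1 \<sigma>2 p = (\<chi> l. if l = i then sg \<sigma>1 * p$i else if l = j then sg \<sigma>2 * p$j
      else (z$i * sg \<sigma>1 * p$i + z$j * sg \<sigma>2 * p$j - (\<Sum>k\<in>KK i j. z$k * p$k)) / ss i j z - p$l)"

definition y0 :: "'n::finite \<Rightarrow> 'n \<Rightarrow> real^'n \<Rightarrow> real^'n" where
  "y0 i j z = (\<chi> l. if l = i \<or> l = j then 0 else 1 / ss i j z)"

definition coef :: "'n::finite \<Rightarrow> 'n \<Rightarrow> real^'n \<Rightarrow> bool \<Rightarrow> bool \<Rightarrow> 'n \<Rightarrow> real" where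
  "coef i j z \<sigma>1 \<sigma>2 l = (if l = i then ss i j z * qq \<sigma>1 - z$i * sg \<sigma>1
      else if l = j then ss i j z * qq \<sigma>2 - z$j * sg \<sigma>2 else z$l)"

definition Piece :: "'n::finite \<Rightarrow> 'n \<Rightarrow> real^'n \<Rightarrow> bool \<Rightarrow> bool \<Rightarrow> (real^'n) set" where
  "Piece i j z \<sigma>1 \<sigma>2 = {y \<in> Rset i j z. 0 \<le> sg \<sigma>1 * y$i \<and> 0 \<le> sg \<sigma>2 * y$j}"

definition Spc :: "'n::finite \<Rightarrow> 'n \<Rightarrow> real^'n \<Rightarrow> bool \<Rightarrow> bool \<Rightarrow> (real^'n) set" where
  "Spc i j z \<sigma>1 \<sigma>2 = {p. (\<forall>l. 0 \<le> p$l) \<and> (\<Sum>l\<in>UNIV. coef i j z \<sigma>1 \<sigma>2 l * p$l) \<le> 1}"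

lemma sg_sq[simp]: "sg \<sigma> * sg \<sigma> = 1" by (simp add: sg_def)

lemma max_qq: "0 \<le> sg \<sigma> * t \<Longrightarrow> max 0 t = qq \<sigma> * t"
  by (auto simp: sg_def qq_def)

lemma coef_pos:
  fixes z :: "real^'n::finite"
  assumes ij: "i \<noteq> j" and a: "0 < z$i" "z$i < ss i j z" and b: "0 < z$j" "z$j < ss i j z"
    and t: "\<And>k. k \<in> KK i j \<Longrightarrow> 0 < z$k"
  shows "0 < coef i j z \<sigma>1 \<sigma>2 l"
  using assms by (auto simp: coef_def qq_def sg_def KK_iff)

lemma piece_eq:
  fixes z :: "real^'n::finite"
  assumes ij: "i \<noteq> j" and s: "0 < ss i j z"
  shows "Piece i j z \<sigma>1 \<sigma>2 = (\<lambda>p. y0 i j z + Lmap i j z \<sigma>1 \<sigma>2 p) ` Spc i j z \<sigma>1 \<sigma>2"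
proof
  define T where "T = (\<Sum>k\<in>KK i j. z$k)"
  have sT: "ss i j z = 1 - T" by (simp add: ss_def T_def)
  show "(\<lambda>p. y0 i j z + Lmap i j z \<sigma>1 \<sigma>2 p) ` Spc i j z \<sigma>1 \<sigma>2 \<subseteq> Piece i j z \<sigma>1 \<sigma>2"
  proof
    fix y assume "y \<in> (\<lambda>p. y0 i j z + Lmap i j z \<sigma>1 \<sigma>2 p) ` Spc i j z \<sigma>1 \<sigma>2"
    then obtain p where p: "p \<in> Spc i j z \<sigma>1 \<sigma>2" and y: "y = y0 i j z + Lmap i j z \<sigma>1 \<sigma>2 p" by blast
    define tp where "tp = (\<Sum>k\<in>KK i j. z$k * p$k)"
    define W where "W = (z$i * sg \<sigma>1 * p$i + z$j * sg \<sigma>2 * p$j + T - tp) / ss i j z"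
    have pnn: "\<And>l. 0 \<le> p$l" and psum: "(\<Sum>l\<in>UNIV. coef i j z \<sigma>1 \<sigma>2 l * p$l) \<le> 1"
      using p by (auto simp: Spc_def)
    have yi: "y$i = sg \<sigma>1 * p$i" and yj: "y$j = sg \<sigma>2 * p$j"
      using ij by (auto simp: y y0_def Lmap_def)
    have yk: "y$k = 1 + W - p$k" if k: "k \<in> KK i j" for k
    proof -
      have "y$k = 1 / ss i j z + (z$i * sg \<sigma>1 * p$i + z$j * sg \<sigma>2 * p$j - tp) / ss i j z - p$k"
        using k by (auto simp: y y0_def Lmap_def KK_iff tp_def)
      also have "\<dots> = 1 + W - p$k"
        using s unfolding W_def sT by (simp add: field_simps)
      finally show ?thesis .
    qed
    have sumk: "(\<Sum>k\<in>KK i j. z$k * y$k) = T + T * W - tp"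
    proof -
      have "(\<Sum>k\<in>KK i j. z$k * y$k) = (\<Sum>k\<in>KK i j. z$k + z$k * W - z$k * p$k)"
        by (rule sum.cong) (auto simp: yk algebra_simps)
      then show ?thesis by (simp add: sum.distrib sum_subtractf T_def tp_def sum_distrib_right)
    qed
    have w: "z \<bullet> y = W"
    proof -
      have "z \<bullet> y = z$i * sg \<sigma>1 * p$i + z$j * sg \<sigma>2 * p$j + T + T * W - tp"
        unfolding inner_split[OF ij] sumk yi yj by simp
      also have "\<dots> = W"
        using s unfolding W_def sT by (simp add: field_simps)
      finally show ?thesis .
    qed
    have s1: "0 \<le> sg \<sigma>1 * y$i" "0 \<le> sg \<sigma>2 * y$j"
      using pnn by (auto simp: yi yj mult.assoc[symmetric])
    have M: "max 0 (y$i) + max 0 (y$j) = qq \<sigma>1 * sg \<sigma>1 * p$i + qq \<sigma>2 * sg \<sigma>2 * p$j"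
      using max_qq[OF s1(1)] max_qq[OF s1(2)] by (simp add: yi yj mult.assoc)
    have cs: "(\<Sum>l\<in>UNIV. coef i j z \<sigma>1 \<sigma>2 l * p$l) = coef i j z \<sigma>1 \<sigma>2 i * p$i + coef i j z \<sigma>1 \<sigma>2 j * p$j + tp"
      unfolding sum_split3[OF ij] tp_def by (auto simp: coef_def KK_iff intro!: sum.cong)
    have qs: "qq \<sigma> * sg \<sigma> = qq \<sigma>" for \<sigma> by (simp add: qq_def sg_def)
    have "max 0 (y$i) + max 0 (y$j) - z \<bullet> y \<le> 1"
    proof -
      have "ss i j z * (max 0 (y$i) + max 0 (y$j) - z \<bullet> y)
          = coef i j z \<sigma>1 \<sigma>2 i * p$i + coef i j z \<sigma>1 \<sigma>2 j * p$j + tp - T"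
        unfolding M w W_def using s ij by (simp add: coef_def field_simps qs)
      also have "\<dots> \<le> 1 - T" using psum cs by simp
      finally have "ss i j z * (max 0 (y$i) + max 0 (y$j) - z \<bullet> y) \<le> ss i j z * 1" by (simp add: sT)
      then show ?thesis using s by (simp add: mult_le_cancel_left_pos)
    qed
    moreover have "\<forall>k\<in>KK i j. y$k - z \<bullet> y \<le> 1"
      using pnn by (auto simp: yk w)
    ultimately show "y \<in> Piece i j z \<sigma>1 \<sigma>2"
      using s1 by (auto simp: Piece_def Rset_def)
  qed
next
  define T where "T = (\<Sum>k\<in>KK i j. z$k)"
  have sT: "ss i j z = 1 - T" by (simp add: ss_def T_def)
  show "Piece i j z \<sigma>1 \<sigma>2 \<subseteq> (\<lambda>p. y0 i j z + Lmap i j z \<sigma>1 \<sigma>2 p) ` Spc i j z \<sigma>1 \<sigma>2"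
  proof
    fix y assume y: "y \<in> Piece i j z \<sigma>1 \<sigma>2"
    define w where "w = z \<bullet> y"
    have s1: "0 \<le> sg \<sigma>1 * y$i" "0 \<le> sg \<sigma>2 * y$j" and R1: "max 0 (y$i) + max 0 (y$j) - w \<le> 1"
      and R2: "\<And>k. k \<in> KK i j \<Longrightarrow> y$k - w \<le> 1"
      using y by (auto simp: Piece_def Rset_def w_def)
    define p :: "real^'n" where "p = (\<chi> l. if l = i then sg \<sigma>1 * y$i else if l = j then sg \<sigma>2 * y$j else 1 + w - y$l)"
    define tp where "tp = (\<Sum>k\<in>KK i j. z$k * p$k)"
    have wsplit: "w = z$i * y$i + z$j * y$j + (\<Sum>k\<in>KK i j. z$k * y$k)"
      unfolding w_def inner_split[OF ij] ..
    have tp: "tp = T + T * w - (w - z$i * y$i - z$j * y$j)"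
    proof -
      have "tp = (\<Sum>k\<in>KK i j. z$k + z$k * w - z$k * y$k)"
        unfolding tp_def by (rule sum.cong) (auto simp: p_def KK_iff algebra_simps)
      also have "\<dots> = T + T * w - (\<Sum>k\<in>KK i j. z$k * y$k)"
        by (simp add: sum.distrib sum_subtractf T_def sum_distrib_right)
      finally show ?thesis using wsplit by simp
    qed
    have pi: "p$i = sg \<sigma>1 * y$i" and pj: "p$j = sg \<sigma>2 * y$j"
      using ij by (auto simp: p_def)
    have pnn: "0 \<le> p$l" for l
    proof -
      have "l \<noteq> i \<Longrightarrow> l \<noteq> j \<Longrightarrow> y$l \<le> 1 + w" using R2[of l] by (auto simp: KK_iff)
      then show ?thesis using s1 by (auto simp: p_def)
    qed
    have M: "max 0 (y$i) + max 0 (y$j) = qq \<sigma>1 * y$i + qq \<sigma>2 * y$j"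
      using max_qq[OF s1(1)] max_qq[OF s1(2)] by simp
    have cs: "(\<Sum>l\<in>UNIV. coef i j z \<sigma>1 \<sigma>2 l * p$l) = coef i j z \<sigma>1 \<sigma>2 i * p$i + coef i j z \<sigma>1 \<sigma>2 j * p$j + tp"
      unfolding sum_split3[OF ij] tp_def by (auto simp: coef_def KK_iff intro!: sum.cong)
    have qs: "qq \<sigma> * sg \<sigma> * sg \<sigma> = qq \<sigma>" "sg \<sigma> * (sg \<sigma> * t) = t" "qq \<sigma> * (sg \<sigma> * t) = qq \<sigma> * t" for \<sigma> t by (auto simp: qq_def sg_def)
    have "(\<Sum>l\<in>UNIV. coef i j z \<sigma>1 \<sigma>2 l * p$l) = ss i j z * (max 0 (y$i) + max 0 (y$j) - w) + T"
      unfolding cs tp M pi pj using ij by (simp add: coef_def algebra_simps sT qs)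
    also have "\<dots> \<le> ss i j z * 1 + T"
      using R1 s by (intro add_right_mono mult_left_mono) auto
    finally have "p \<in> Spc i j z \<sigma>1 \<sigma>2" using pnn by (auto simp: Spc_def sT)
    moreover have "y = y0 i j z + Lmap i j z \<sigma>1 \<sigma>2 p"
    proof (subst vec_eq_iff, intro allI)
      fix l
      show "y$l = (y0 i j z + Lmap i j z \<sigma>1 \<sigma>2 p)$l"
      proof (cases "l = i \<or> l = j")
        case True then show ?thesis using ij by (auto simp: y0_def Lmap_def p_def qs)
      next
        case False
        then have "(y0 i j z + Lmap i j z \<sigma>1 \<sigma>2 p)$l
           = 1 / ss i j z + (z$i * sg \<sigma>1 * p$i + z$j * sg \<sigma>2 * p$j - tp) / ss i j z - p$l"
          by (simp add: y0_def Lmap_def tp_def)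
        also have "\<dots> = y$l"
          using False s unfolding pi pj tp by (simp add: p_def field_simps sT qs)
        finally show ?thesis by simp
      qed
    qed
    ultimately show "y \<in> (\<lambda>p. y0 i j z + Lmap i j z \<sigma>1 \<sigma>2 p) ` Spc i j z \<sigma>1 \<sigma>2" by blast
  qed
qed

lemma linear_Lmap: "linear (Lmap i j z \<sigma>1 \<sigma>2)"
  by (rule linearI) (auto simp: Lmap_def vec_eq_iff algebra_simps sum.distrib sum_distrib_left add_divide_distrib diff_divide_distrib)

lemma det_Lmap:
  fixes z :: "real^'n::finite"
  assumes ij: "i \<noteq> j" and s: "0 < ss i j z"
  shows "\<bar>det (matrix (Lmap i j z \<sigma>1 \<sigma>2))\<bar> = 1 / ss i j z"
proof -
  define d where "d = (\<lambda>r. if r = i then sg \<sigma>1 else if r = j then sg \<sigma>2 else (-1::real))"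
  define u where "u = (\<lambda>r. if r = i \<or> r = j then 0 else 1 / ss i j z)"
  define V :: "real^'n" where "V = (\<chi> c. if c = i then z$i * sg \<sigma>1 else if c = j then z$j * sg \<sigma>2 else - z$c)"
  have sumax: "(\<Sum>k\<in>KK i j. z$k * (if k = c then 1 else 0)) = (if c = i \<or> c = j then 0 else z$c)" for c
    by (auto simp: KK_iff if_distrib[of "\<lambda>t. _ * t"] sum.delta cong: if_cong)
  have "matrix (Lmap i j z \<sigma>1 \<sigma>2) = (\<chi> r c. (if r = c then d r else 0) + u r * V$c)"
    unfolding matrix_def using ij
    by (auto simp: vec_eq_iff Lmap_def d_def u_def V_def sumax axis_def)
  then have "det (matrix (Lmap i j z \<sigma>1 \<sigma>2)) = prod d UNIV + (\<Sum>r\<in>UNIV. u r * V$r * prod d (UNIV - {r}))"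
    by (simp add: det_diag_rank1)
  also have "(\<Sum>r\<in>UNIV. u r * V$r * prod d (UNIV - {r})) = (\<Sum>r\<in>KK i j. z$r / ss i j z * prod d UNIV)"
  proof -
    have "(\<Sum>r\<in>UNIV. u r * V$r * prod d (UNIV - {r})) = (\<Sum>r\<in>KK i j. u r * V$r * prod d (UNIV - {r}))"
      by (simp add: sum_split3[OF ij] u_def)
    also have "\<dots> = (\<Sum>r\<in>KK i j. z$r / ss i j z * prod d UNIV)"
    proof (rule sum.cong)
      fix r assume r: "r \<in> KK i j"
      have "prod d UNIV = d r * prod d (UNIV - {r})" by (simp add: prod.remove)
      then have "prod d UNIV = - prod d (UNIV - {r})" using r by (simp add: d_def KK_iff)
      then show "u r * V$r * prod d (UNIV - {r}) = z$r / ss i j z * prod d UNIV"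
        using r by (simp add: u_def V_def KK_iff)
    qed simp
    finally show ?thesis .
  qed
  also have "\<dots> = (1 - ss i j z) / ss i j z * prod d UNIV"
    by (simp add: sum_distrib_right[symmetric] sum_divide_distrib[symmetric] ss_def)
  finally have "det (matrix (Lmap i j z \<sigma>1 \<sigma>2)) = prod d UNIV / ss i j z"
    using s by (simp add: field_simps)
  moreover have "\<bar>prod d UNIV\<bar> = 1"
    unfolding abs_prod by (rule prod.neutral) (simp add: d_def sg_def)
  ultimately show ?thesis using s by (simp add: abs_divide)
qed

lemma measure_Piece:
  fixes z :: "real^'n::finite"
  assumes ij: "i \<noteq> j" and a: "0 < z$i" "z$i < ss i j z" and b: "0 < z$j" "z$j < ss i j z"
    and t: "\<And>k. k \<in> KK i j \<Longrightarrow> 0 < z$k"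
  shows "Piece i j z \<sigma>1 \<sigma>2 \<in> lmeasurable"
    and "measure lebesgue (Piece i j z \<sigma>1 \<sigma>2) =
           1 / (ss i j z * prod (coef i j z \<sigma>1 \<sigma>2) UNIV * fact CARD('n))"
proof -
  have s: "0 < ss i j z" using a by simp
  have c: "\<And>l. 0 < coef i j z \<sigma>1 \<sigma>2 l" by (rule coef_pos[OF ij a b t])
  have Sm: "Spc i j z \<sigma>1 \<sigma>2 \<in> lmeasurable" and Smeas: "measure lebesgue (Spc i j z \<sigma>1 \<sigma>2) = 1 / (prod (coef i j z \<sigma>1 \<sigma>2) UNIV * fact CARD('n))"
    unfolding Spc_def using measure_Sp[of "coef i j z \<sigma>1 \<sigma>2", OF c] by auto
  have eq: "Piece i j z \<sigma>1 \<sigma>2 = (+) (y0 i j z) ` (Lmap i j z \<sigma>1 \<sigma>2 ` Spc i j z \<sigma>1 \<sigma>2)"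
    unfolding piece_eq[OF ij s] image_comp o_def ..
  have L: "Lmap i j z \<sigma>1 \<sigma>2 ` Spc i j z \<sigma>1 \<sigma>2 \<in> lmeasurable"
    by (rule measurable_linear_image_fin[OF linear_Lmap Sm])
  show "Piece i j z \<sigma>1 \<sigma>2 \<in> lmeasurable"
    unfolding eq by (rule measurable_translation[OF L])
  show "measure lebesgue (Piece i j z \<sigma>1 \<sigma>2) =
           1 / (ss i j z * prod (coef i j z \<sigma>1 \<sigma>2) UNIV * fact CARD('n))"
    unfolding eq measure_translation measure_linear_image_fin[OF linear_Lmap Sm] det_Lmap[OF ij s] Smeas
    by simp
qed

lemma prod_split3:
  fixes f :: "'n::finite \<Rightarrow> 'a::comm_monoid_mult"
  assumes "i \<noteq> j"
  shows "prod f UNIV = f i * f j * prod f (KK i j)"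
proof -
  have "UNIV = insert i (insert j (KK i j))" by (auto simp: KK_def)
  then have "prod f UNIV = prod f (insert i (insert j (KK i j)))" by simp
  also have "\<dots> = f i * f j * prod f (KK i j)"
    using assms by (simp add: KK_def mult.assoc)
  finally show ?thesis .
qed

lemma UNIV_bool2: "(UNIV :: (bool \<times> bool) set) = {(True,True),(True,False),(False,True),(False,False)}"
  by auto

lemma alg4:
  fixes x1 x2 y1 y2 S P N :: real
  assumes "x1 \<noteq> 0" "x2 \<noteq> 0" "y1 \<noteq> 0" "y2 \<noteq> 0" "S \<noteq> 0" "P \<noteq> 0" "N \<noteq> 0"
  shows "1/(S*(x1*y1*P)*N) + (1/(S*(x1*y2*P)*N) + (1/(S*(x2*y1*P)*N) + 1/(S*(x2*y2*P)*N)))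
     = (1/x2 + 1/x1)*(1/y2+1/y1)/(S*P*N)"
  using assms by (simp add: field_simps)

lemma measure_Rset:
  fixes z :: "real^'n::finite"
  assumes ij: "i \<noteq> j" and a: "0 < z$i" "z$i < ss i j z" and b: "0 < z$j" "z$j < ss i j z"
    and t: "\<And>k. k \<in> KK i j \<Longrightarrow> 0 < z$k"
  shows "measure lebesgue (Rset i j z) =
     (1 / z$i + 1 / (ss i j z - z$i)) * (1 / z$j + 1 / (ss i j z - z$j))
       / (ss i j z * prod (\<lambda>k. z$k) (KK i j) * fact CARD('n))"
proof -
  define F where "F = (\<lambda>\<sigma>::bool \<times> bool. Piece i j z (fst \<sigma>) (snd \<sigma>))"
  have RU: "Rset i j z = \<Union>(F ` UNIV)"
  proof
    show "Rset i j z \<subseteq> \<Union>(F ` UNIV)"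
    proof
      fix y assume y: "y \<in> Rset i j z"
      have "y \<in> F (0 \<le> y$i, 0 \<le> y$j)" using y by (auto simp: F_def Piece_def sg_def)
      then show "y \<in> \<Union>(F ` UNIV)" by blast
    qed
  qed (auto simp: F_def Piece_def)
  have meas: "F \<sigma> \<in> lmeasurable" for \<sigma>
    unfolding F_def by (rule measure_Piece(1)[OF ij a b t])
  have neg: "pairwise (\<lambda>\<sigma> \<tau>. negligible (F \<sigma> \<inter> F \<tau>)) UNIV"
    unfolding pairwise_def
  proof (intro ballI impI)
    fix \<sigma> \<tau> :: "bool \<times> bool"
    assume ne: "\<sigma> \<noteq> \<tau>"
    show "negligible (F \<sigma> \<inter> F \<tau>)"
    proof (cases "fst \<sigma> = fst \<tau>")
      case False
      have "F \<sigma> \<inter> F \<tau> \<subseteq> {x. x$i = 0}"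
        using False by (auto simp: F_def Piece_def sg_def split: if_splits)
      then show ?thesis by (rule negligible_subset[OF negligible_standard_hyperplane_cart])
    next
      case True
      then have "snd \<sigma> \<noteq> snd \<tau>" using ne by (simp add: prod_eq_iff)
      then have "F \<sigma> \<inter> F \<tau> \<subseteq> {x. x$j = 0}"
        by (auto simp: F_def Piece_def sg_def split: if_splits)
      then show ?thesis by (rule negligible_subset[OF negligible_standard_hyperplane_cart])
    qed
  qed
  have "measure lebesgue (Rset i j z) = (\<Sum>\<sigma>\<in>UNIV. measure lebesgue (F \<sigma>))"
    unfolding RU by (rule measure_negligible_finite_Union_image[OF _ _ neg]) (auto intro: meas)
  also have "\<dots> = (\<Sum>\<sigma>\<in>UNIV. 1 / (ss i j z * prod (coef i j z (fst \<sigma>) (snd \<sigma>)) UNIV * fact CARD('n)))"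
    unfolding F_def by (simp add: measure_Piece(2)[OF ij a b t])
  also have "\<dots> = (1 / z$i + 1 / (ss i j z - z$i)) * (1 / z$j + 1 / (ss i j z - z$j))
       / (ss i j z * prod (\<lambda>k. z$k) (KK i j) * fact CARD('n))"
  proof -
    have pc: "prod (coef i j z s1 s2) UNIV = (if s1 then ss i j z - z$i else z$i) * (if s2 then ss i j z - z$j else z$j) * prod (\<lambda>k. z$k) (KK i j)" for s1 s2
      unfolding prod_split3[OF ij] using ij by (auto simp: coef_def qq_def sg_def KK_iff intro!: prod.cong)
    have P: "prod (\<lambda>k. z$k) (KK i j) \<noteq> 0" using t by (simp add: prod_pos less_imp_neq[symmetric])
    show ?thesis
      unfolding UNIV_bool2 using ij a b P by (simp add: pc alg4)
  qed
  finally show ?thesis .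
qed




definition hsh :: "'n::finite \<Rightarrow> 'n \<Rightarrow> real^'n \<Rightarrow> real^'n" where
  "hsh i j p = (\<chi> l. if l = i then p$i + p$j else p$l)"

lemma linear_hsh: "linear (hsh i j)"
  by (rule linearI) (auto simp: hsh_def vec_eq_iff algebra_simps)

lemma det_hsh:
  fixes i j :: "'n::finite"
  assumes ij: "i \<noteq> j"
  shows "det (matrix (hsh i j)) = 1"
proof -
  have "matrix (hsh i j) = (\<chi> r c. (if r = c then (\<lambda>_. 1::real) r else 0) + (axis i 1 :: real^'n)$r * (axis j 1 :: real^'n)$c)"
    unfolding matrix_def using ij by (auto simp: vec_eq_iff hsh_def axis_def)
  then have "det (matrix (hsh i j)) = (\<Prod>r\<in>(UNIV::'n set). (1::real)) + (\<Sum>r\<in>UNIV. (axis i 1 :: real^'n)$r * (axis j 1 :: real^'n)$r * (\<Prod>r\<in>UNIV - {r}. (1::real)))"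
    by (simp only: det_diag_rank1)
  moreover have "(\<Sum>r\<in>UNIV. (axis i 1 :: real^'n)$r * (axis j 1 :: real^'n)$r * (\<Prod>r\<in>UNIV - {r}. (1::real))) = 0"
    using ij by (intro sum.neutral) (auto simp: axis_def)
  ultimately show ?thesis by simp
qed

lemma KK_sym: "KK i j = KK j i" by (auto simp: KK_def)

lemma Cset_sym: "Cset i j = Cset j i" by (auto simp: Cset_def KK_sym)

lemma half_eq:
  fixes i j :: "'n::finite"
  assumes ij: "i \<noteq> j"
  shows "{x \<in> Cset i j. x$j \<le> x$i} = hsh i j ` Std"
proof
  show "{x \<in> Cset i j. x$j \<le> x$i} \<subseteq> hsh i j ` Std"
  proof
    fix x :: "real^'n" assume x: "x \<in> {x \<in> Cset i j. x$j \<le> x$i}"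
    define p :: "real^'n" where "p = (\<chi> l. if l = i then x$i - x$j else x$l)"
    have "(\<Sum>l\<in>UNIV. p$l) = x$i + (\<Sum>k\<in>KK i j. x$k)"
      unfolding sum_split3[OF ij] using ij by (auto simp: p_def KK_iff intro!: sum.cong)
    then have "p \<in> Std" using x by (auto simp: Std_def Cset_def p_def KK_iff)
    moreover have "x = hsh i j p" using ij by (auto simp: vec_eq_iff hsh_def p_def)
    ultimately show "x \<in> hsh i j ` Std" by blast
  qed
next
  show "hsh i j ` Std \<subseteq> {x \<in> Cset i j. x$j \<le> x$i}"
  proof
    fix x assume "x \<in> hsh i j ` Std"
    then obtain p where p: "p \<in> Std" and x: "x = hsh i j p" by blast
    have pnn: "\<And>l. 0 \<le> p$l" and ps: "(\<Sum>l\<in>UNIV. p$l) \<le> 1" using p by (auto simp: Std_def)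
    have S: "(\<Sum>k\<in>KK i j. x$k) = (\<Sum>k\<in>KK i j. p$k)"
      by (auto simp: x hsh_def KK_iff intro!: sum.cong)
    have ps': "p$i + p$j + (\<Sum>k\<in>KK i j. p$k) \<le> 1" using ps unfolding sum_split3[OF ij] .
    have "0 \<le> (\<Sum>k\<in>KK i j. p$k)" using pnn by (simp add: sum_nonneg)
    moreover have "0 \<le> p$i" "0 \<le> p$j" using pnn by auto
    moreover have "p$j + (\<Sum>k\<in>KK i j. p$k) \<le> 1" using ps' pnn[of i] by linarith
    ultimately show "x \<in> {x \<in> Cset i j. x$j \<le> x$i}"
      using pnn ps' ij unfolding Cset_def S by (auto simp: x hsh_def KK_iff)
  qed
qed

lemma measure_Cset:
  fixes i j :: "'n::finite"
  assumes ij: "i \<noteq> j"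
  shows "measure lebesgue (Cset i j) = 2 / fact CARD('n)"
proof -
  have h1: "{x \<in> Cset i j. x$j \<le> x$i} \<in> lmeasurable" "measure lebesgue {x \<in> Cset i j. x$j \<le> x$i} = 1 / fact CARD('n)"
    unfolding half_eq[OF ij]
    using measurable_linear_image_fin[OF linear_hsh[of i j] Std_lmeasurable] measure_linear_image_fin[OF linear_hsh[of i j] Std_lmeasurable]
    by (auto simp: det_hsh[OF ij] measure_Std)
  have h2: "{x \<in> Cset i j. x$i \<le> x$j} \<in> lmeasurable" "measure lebesgue {x \<in> Cset i j. x$i \<le> x$j} = 1 / fact CARD('n)"
    unfolding Cset_sym[of i j] half_eq[OF ij[symmetric]]
    using measurable_linear_image_fin[OF linear_hsh[of j i] Std_lmeasurable] measure_linear_image_fin[OF linear_hsh[of j i] Std_lmeasurable]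
    by (auto simp: det_hsh[OF ij[symmetric]] measure_Std)
  have U: "Cset i j = {x \<in> Cset i j. x$j \<le> x$i} \<union> {x \<in> Cset i j. x$i \<le> x$j}" by auto
  have "negligible {x::real^'n. (axis i 1 - axis j 1) \<bullet> x = 0}"
    by (rule negligible_hyperplane) (use ij in \<open>auto simp: axis_eq_axis\<close>)
  moreover have "{x \<in> Cset i j. x$j \<le> x$i} \<inter> {x \<in> Cset i j. x$i \<le> x$j} \<subseteq> {x::real^'n. (axis i 1 - axis j 1) \<bullet> x = 0}"
    by (auto simp: inner_diff_left inner_axis')
  ultimately have N: "negligible ({x \<in> Cset i j. x$j \<le> x$i} \<inter> {x \<in> Cset i j. x$i \<le> x$j})"
    by (rule negligible_subset)
  have "measure lebesgue (Cset i j) = measure lebesgue {x \<in> Cset i j. x$j \<le> x$i} + measure lebesgue {x \<in> Cset i j. x$i \<le> x$j} + measure lebesgue ({}::(real^'n) set)"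
    by (rule measure_Un3_negligible) (use h1 h2 N U in auto)
  then show ?thesis using h1 h2 by simp
qed




lemma e_bound: "exp (1::real) \<le> (73/64)^8"
proof -
  have "exp (1/8::real) \<le> 1 + 1/8 + (1/8)^2" by (rule exp_bound) auto
  then have h: "exp (1/8::real) \<le> 73/64" by (simp add: power2_eq_square)
  have "exp (1::real) = exp (1/8) ^ 8"
    using exp_of_nat_mult[of 8 "1/8::real"] by simp
  also have "\<dots> \<le> (73/64)^8" by (rule power_mono[OF h]) simp
  finally show ?thesis .
qed

lemma key_ineq:
  fixes N :: nat
  assumes "3 \<le> N"
  shows "8 * (real N + 1) ^ (N + 1) < 27 * real N ^ (N + 1)"
proof (cases "N \<le> 5")
  case True
  then have "N = 3 \<or> N = 4 \<or> N = 5" using assms by auto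
  then show ?thesis by auto
next
  case False
  then have N6: "6 \<le> real N" by simp
  have Npos: "0 < real N" using N6 by simp
  have "(1 + 1 / real N) ^ N \<le> exp (1 / real N) ^ N"
    by (rule power_mono) (auto simp: add_nonneg_nonneg)
  also have "\<dots> = exp 1"
    using exp_of_nat_mult[of N "1 / real N"] Npos by simp
  finally have e1: "(1 + 1 / real N) ^ N \<le> (73/64)^8" using e_bound by simp
  have e2: "1 + 1 / real N \<le> 7/6" using N6 by (simp add: field_simps)
  have "(real N + 1) ^ (N + 1) = real N ^ (N + 1) * ((1 + 1 / real N) ^ N * (1 + 1 / real N))"
    using Npos by (simp add: field_simps power_mult_distrib[symmetric])
  also have "\<dots> \<le> real N ^ (N + 1) * ((73/64)^8 * (7/6))"
    using e1 e2 by (intro mult_left_mono mult_mono) auto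
  finally have "8 * (real N + 1) ^ (N + 1) \<le> 8 * ((73/64)^8 * (7/6)) * real N ^ (N + 1)" by simp
  also have "\<dots> < 27 * real N ^ (N + 1)"
  proof -
    have "28 * (73/64::real)^8 < 81" by (simp add: power_divide)
    then show ?thesis using Npos by (intro mult_strict_right_mono) auto
  qed
  finally show ?thesis .
qed




lemma card_KK:
  fixes i j :: "'n::finite"
  assumes "i \<noteq> j"
  shows "card (KK i j) = CARD('n) - 2"
  using assms by (simp add: KK_def card_Diff_subset)

lemma interior_conds:
  fixes i j :: "'n::finite" and c :: "real^'n"
  assumes ij: "i \<noteq> j" and c: "c \<in> interior (Cset i j)"
  shows "0 < c$i" "c$i < ss i j c" "0 < c$j" "c$j < ss i j c" "\<And>k. k \<in> KK i j \<Longrightarrow> 0 < c$k"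
proof -
  obtain e where e: "0 < e" "ball c e \<subseteq> Cset i j" using c by (auto simp: mem_interior)
  have inC: "c + t *\<^sub>R axis l 1 \<in> Cset i j" if "\<bar>t\<bar> < e" for t l
  proof -
    have "dist c (c + t *\<^sub>R axis l 1) < e" using that by (simp add: dist_norm)
    then show ?thesis using e by auto
  qed
  have lo: "0 < c$l" if l: "l = i \<or> l = j \<or> l \<in> KK i j" for l
  proof -
    have "c + (- e/2) *\<^sub>R axis l 1 \<in> Cset i j" using e by (intro inC) auto
    then have "0 \<le> (c + (- e/2) *\<^sub>R axis l 1)$l" using l by (auto simp: Cset_def)
    then show ?thesis using e by simp
  qed
  show "0 < c$i" "0 < c$j" "\<And>k. k \<in> KK i j \<Longrightarrow> 0 < c$k" using lo by auto
  have sK: "(\<Sum>k\<in>KK i j. (c + t *\<^sub>R axis l 1)$k) = (\<Sum>k\<in>KK i j. c$k)" if "l = i \<or> l = j" for t l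
    using that by (intro sum.cong) (auto simp: KK_iff axis_def)
  have "c + (e/2) *\<^sub>R axis i 1 \<in> Cset i j" using e by (intro inC) auto
  then have "(c + (e/2) *\<^sub>R axis i 1)$i + (\<Sum>k\<in>KK i j. c$k) \<le> 1"
    using sK[of i "e/2"] by (simp add: Cset_def)
  then show "c$i < ss i j c" using e by (simp add: ss_def)
  have "c + (e/2) *\<^sub>R axis j 1 \<in> Cset i j" using e by (intro inC) auto
  then have "(c + (e/2) *\<^sub>R axis j 1)$j + (\<Sum>k\<in>KK i j. c$k) \<le> 1"
    using sK[of j "e/2"] by (simp add: Cset_def)
  then show "c$j < ss i j c" using e by (simp add: ss_def)
qed

definition zz :: "'n::finite \<Rightarrow> 'n \<Rightarrow> real^'n" where
  "zz i j = (\<chi> l. if l = i \<or> l = j then 3 / (2 * (real CARD('n) + 1)) else 1 / (real CARD('n) + 1))"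

lemma ss_zz:
  fixes i j :: "'n::finite"
  assumes ij: "i \<noteq> j"
  shows "ss i j (zz i j) = 3 / (real CARD('n) + 1)"
proof -
  have "(\<Sum>k\<in>KK i j. zz i j $ k) = (\<Sum>k\<in>KK i j. 1 / (real CARD('n) + 1))"
    by (intro sum.cong) (auto simp: zz_def KK_iff)
  also have "\<dots> = (real CARD('n) - 2) / (real CARD('n) + 1)"
  proof -
    have "card {i, j} \<le> CARD('n)" by (rule card_mono) auto
    then have "2 \<le> CARD('n)" using ij by simp
    then show ?thesis using card_KK[OF ij] by (simp add: of_nat_diff)
  qed
  finally show ?thesis unfolding ss_def by (simp add: field_simps)
qed

lemma zz_interior:
  fixes i j :: "'n::finite"
  assumes ij: "i \<noteq> j"
  shows "zz i j \<in> interior (Cset i j)"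
proof -
  define N where "N = real CARD('n)"
  have "card {i, j} \<le> CARD('n)" by (rule card_mono) auto
  then have "2 \<le> CARD('n)" using ij by simp
  then have N2: "2 \<le> N" unfolding N_def by simp
  have cK: "real (card (KK i j)) = N - 2" using card_KK[OF ij] N2 unfolding N_def by (simp add: of_nat_diff)
  define v where "v = 1 / (N + 1)"
  have v0: "0 < v" using N2 by (simp add: v_def)
  have Nv: "N * v = 1 - v" using N2 by (simp add: v_def field_simps)
  define e where "e = v * v"
  have e0: "0 < e" using v0 by (simp add: e_def)
  have ev: "e \<le> v / 2"
  proof -
    have "v \<le> 1/3" using N2 by (simp add: v_def field_simps)
    then have "v * v \<le> v * (1/3)" using v0 by (intro mult_left_mono) auto
    moreover have "0 \<le> v * v" by simp
    ultimately show ?thesis unfolding e_def using v0 by linarith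
  qed
  have zl: "zz i j $ l = (if l = i \<or> l = j then (3/2) * v else v)" for l
    by (simp add: zz_def N_def v_def)
  have "ball (zz i j) e \<subseteq> Cset i j"
  proof
    fix x assume x: "x \<in> ball (zz i j) e"
    have comp: "\<bar>x$l - zz i j $ l\<bar> < e" for l
    proof -
      have "\<bar>(x - zz i j)$l\<bar> \<le> norm (x - zz i j)" by (rule component_le_norm_cart)
      also have "\<dots> < e" using x by (simp add: dist_norm norm_minus_commute)
      finally show ?thesis by simp
    qed
    have pos: "0 \<le> x$l" for l
    proof -
      have "v \<le> zz i j $ l" unfolding zl using v0 by auto
      then show ?thesis using comp[of l] ev v0 by linarith
    qed
    have Ssum: "(\<Sum>k\<in>KK i j. x$k) \<le> (N - 2) * (v + e)"
    proof -
      have "(\<Sum>k\<in>KK i j. x$k) \<le> (\<Sum>k\<in>KK i j. v + e)"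
      proof (rule sum_mono)
        fix k assume "k \<in> KK i j"
        then have "zz i j $ k = v" unfolding zl by (auto simp: KK_iff)
        then show "x$k \<le> v + e" using comp[of k] by linarith
      qed
      also have "\<dots> = (N - 2) * (v + e)" using cK by simp
      finally show ?thesis .
    qed
    have xi: "x$l \<le> (3/2) * v + e" if "l = i \<or> l = j" for l
    proof -
      have "zz i j $ l = (3/2) * v" using that unfolding zl by auto
      then show ?thesis using comp[of l] by linarith
    qed
    have fin: "(3/2) * v + e + (N - 2) * (v + e) \<le> 1"
    proof -
      have A: "(N - 2) * (v + e) = N * v - 2 * v + (N * v) * v - 2 * e"
        by (simp add: e_def algebra_simps)
      have B: "(N * v) * v = v - e" unfolding Nv by (simp add: e_def algebra_simps)
      show ?thesis unfolding A B using Nv ev v0 e0 by linarith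
    qed
    show "x \<in> Cset i j"
      unfolding Cset_def using pos xi[of i] xi[of j] Ssum fin by auto
  qed
  then show ?thesis using e0 by (auto simp: mem_interior)
qed




lemma inv_sum_ge4:
  fixes a s :: real
  assumes "0 < a" "a < s"
  shows "4 / s \<le> 1 / a + 1 / (s - a)"
proof -
  have "0 \<le> (2*a - s)^2" by simp
  then have h: "4 * (a * (s - a)) \<le> s * s" by (simp add: power2_eq_square algebra_simps)
  have "1 / a + 1 / (s - a) = s / (a * (s - a))" using assms by (simp add: field_simps)
  also have "4 / s \<le> s / (a * (s - a))"
    using assms h by (simp add: divide_simps)
  ultimately show ?thesis by simp
qed

lemma M0_value:
  fixes i j :: "'n::finite"
  assumes ij: "i \<noteq> j"
  shows "measure lebesgue (Rset i j (zz i j)) = 16 * (real CARD('n) + 1) ^ (CARD('n) + 1) / (27 * fact CARD('n))"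
proof -
  define n where "n = CARD('n)"
  define N where "N = real n"
  have "card {i, j} \<le> CARD('n)" by (rule card_mono) auto
  then have n2: "2 \<le> n" using ij by (simp add: n_def)
  have N2: "2 \<le> N" using n2 by (simp add: N_def)
  have s: "ss i j (zz i j) = 3 / (N + 1)" using ss_zz[OF ij] by (simp add: N_def n_def)
  have zi: "zz i j $ i = 3 / (2 * (N + 1))" "zz i j $ j = 3 / (2 * (N + 1))"
    by (simp_all add: zz_def N_def n_def)
  have zk: "k \<in> KK i j \<Longrightarrow> zz i j $ k = 1 / (N + 1)" for k
    by (auto simp: zz_def N_def n_def KK_iff)
  have c1: "0 < zz i j $ i" "zz i j $ i < ss i j (zz i j)" "0 < zz i j $ j" "zz i j $ j < ss i j (zz i j)"
    unfolding s zi using N2 by (auto simp: field_simps)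
  have c2: "\<And>k. k \<in> KK i j \<Longrightarrow> 0 < zz i j $ k" using zk N2 by auto
  have pr: "prod (\<lambda>k. zz i j $ k) (KK i j) = (1 / (N + 1)) ^ (n - 2)"
    using zk card_KK[OF ij] by (simp add: n_def prod_constant[symmetric] cong: prod.cong)
  have inv: "1 / (3 / (2 * (N + 1))) + 1 / (3 / (N + 1) - 3 / (2 * (N + 1))) = 4 * (N + 1) / 3"
    using N2 by (simp add: field_simps)
  have pw: "(N + 1) ^ (n + 1) = (N + 1) ^ (n - 2) * (N + 1) ^ 3"
    using n2 by (simp add: power_add[symmetric])
  have "measure lebesgue (Rset i j (zz i j)) =
     (1 / zz i j $ i + 1 / (ss i j (zz i j) - zz i j $ i)) * (1 / zz i j $ j + 1 / (ss i j (zz i j) - zz i j $ j))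
       / (ss i j (zz i j) * prod (\<lambda>k. zz i j $ k) (KK i j) * fact CARD('n))"
    by (rule measure_Rset[OF ij c1 c2])
  also have "\<dots> = (4 * (N + 1) / 3) * (4 * (N + 1) / 3) / (3 / (N + 1) * (1 / (N + 1)) ^ (n - 2) * fact n)"
    unfolding s zi pr inv by (simp add: n_def)
  also have "\<dots> = 16 * (N + 1) ^ (n + 1) / (27 * fact n)"
    unfolding pw using N2 by (simp add: field_simps power_one_over power2_eq_square) (simp add: power3_eq_cube algebra_simps)
  finally show ?thesis by (simp add: N_def n_def)
qed

theorem lemma4p10:
  fixes i j :: "'n::finite" and c :: "real^'n"
  assumes "i \<noteq> j"
    and "santalo_point (sq_pyramid i j) c"
  shows "measure lebesgue (sq_pyramid i j) * measure lebesgue (polar ((\<lambda>x. x - c) ` sq_pyramid i j))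
           \<le> 4 * real CARD('n) ^ (CARD('n) + 1) / (fact CARD('n))^2
       \<and> (measure lebesgue (sq_pyramid i j) * measure lebesgue (polar ((\<lambda>x. x - c) ` sq_pyramid i j))
           = 4 * real CARD('n) ^ (CARD('n) + 1) / (fact CARD('n))^2 \<longleftrightarrow> CARD('n) = 2)"
proof -
  have ij: "i \<noteq> j" by (rule assms(1))
  define n where "n = CARD('n)"
  define N where "N = real n"
  have "card {i, j} \<le> CARD('n)" by (rule card_mono) auto
  then have n2: "2 \<le> n" using ij by (simp add: n_def)
  have P: "sq_pyramid i j = Cset i j" by (rule pyr_eq[OF ij])
  have volP: "measure lebesgue (sq_pyramid i j) = 2 / fact n"
    unfolding P n_def by (rule measure_Cset[OF ij])
  define Mc where "Mc = measure lebesgue (polar ((\<lambda>x. x - c) ` sq_pyramid i j))"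
  have cint: "c \<in> interior (Cset i j)" using assms(2) unfolding santalo_point_def P by simp
  have "Mc \<le> measure lebesgue (polar ((\<lambda>x. x - zz i j) ` sq_pyramid i j))"
    using assms(2) zz_interior[OF ij] unfolding santalo_point_def Mc_def P by simp
  also have "\<dots> = 16 * (N + 1) ^ (n + 1) / (27 * fact n)"
    unfolding polar_eq[OF ij] M0_value[OF ij] by (simp add: N_def n_def)
  finally have Mle: "Mc \<le> 16 * (N + 1) ^ (n + 1) / (27 * fact n)" .
  have Mc0: "0 \<le> Mc" by (simp add: Mc_def)
  have fpos: "0 < (fact n :: real)" by simp
  define B where "B = 4 * N ^ (n + 1) / (fact n)^2"
  have goal: "2 / fact n * Mc \<le> B \<and> (2 / fact n * Mc = B \<longleftrightarrow> n = 2)"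
  proof (cases "n = 2")
    case False
    then have n3: "3 \<le> n" using n2 by simp
    have "2 / fact n * Mc \<le> 2 / fact n * (16 * (N + 1) ^ (n + 1) / (27 * fact n))"
      using Mle fpos by (intro mult_left_mono) auto
    also have "\<dots> = 32 * (N + 1) ^ (n + 1) / (27 * (fact n)^2)"
      by (simp add: power2_eq_square)
    also have "\<dots> < B"
    proof -
      have "8 * (N + 1) ^ (n + 1) < 27 * N ^ (n + 1)" using key_ineq[OF n3] by (simp add: N_def)
      then show ?thesis unfolding B_def using fpos by (simp add: divide_simps)
    qed
    finally show ?thesis using False by simp
  next
    case True
    then have K: "KK i j = {}" using card_KK[OF ij] by (simp add: n_def)
    have ss1: "ss i j c = 1" by (simp add: ss_def K)
    note cc = interior_conds[OF ij cint]
    have "Mc = (1 / c$i + 1 / (ss i j c - c$i)) * (1 / c$j + 1 / (ss i j c - c$j))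
       / (ss i j c * prod (\<lambda>k. c$k) (KK i j) * fact CARD('n))"
      unfolding Mc_def polar_eq[OF ij] by (rule measure_Rset[OF ij cc])
    then have Mval: "Mc = (1 / c$i + 1 / (1 - c$i)) * (1 / c$j + 1 / (1 - c$j)) / 2"
      unfolding ss1 K using True by (simp add: n_def)
    have h1: "4 \<le> 1 / c$i + 1 / (1 - c$i)" using inv_sum_ge4[of "c$i" 1] cc ss1 by simp
    have h2: "4 \<le> 1 / c$j + 1 / (1 - c$j)" using inv_sum_ge4[of "c$j" 1] cc ss1 by simp
    have "16 \<le> (1 / c$i + 1 / (1 - c$i)) * (1 / c$j + 1 / (1 - c$j))"
      using mult_mono[OF h1 h2] h1 by simp
    then have "8 \<le> Mc" unfolding Mval by simp
    moreover have "Mc \<le> 8" using Mle True by (simp add: N_def)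
    ultimately have "Mc = 8" by simp
    then show ?thesis using True by (simp add: B_def N_def)
  qed
  then show ?thesis
    unfolding volP Mc_def[symmetric] B_def N_def n_def by simp
qed



end
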